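(* Let $\Pi$ be the set of graphs $G$ satisfying $\sum_{H:|V(H)|=4} w_H\cdot p(H,G)\le \frac{5}{16}$, where $w_{K_4}=1$, $w_{\bar{K_4}}=\frac12$, $w_{D_4}=\frac{5}{12}$, $w_{\bar{D_4}}=\frac{5}{12}$, $w_{P_3}=\frac13$, $w_{\bar{P_3}}=\frac16$, $w_{C_4}=\frac12$, $w_{\bar{C_4}}=\frac13$, $w_{K_{1,3}}=\frac14$, $w_{\bar{K_{1,3}}}=\frac14$, $w_{P_4}=\frac14$. Let $n\ge4$ and let $G\sim G(n,1/2)$. Then $G\in\Pi$ with probability at least $\frac{1}{2n^4}$.
   Context: $K_4$ is the complete graph on 4 vertices, $D_4$ is $K_4$ minus an edge, $P_3$ is the 4-vertex graph consisting of a path on 3 vertices plus an isolated vertex, $C_4$ the 4-cycle, $P_4$ the path on 4 vertices, $K_{1,3}$ the star on 4 vertices, and $\bar H$ the complement of $H$. $p(H,G)$ is the fraction of induced subgraphs of $G$ on $|V(H)|$ vertices isomorphic to $H$. $G(n,1/2)$ is the uniformly random graph on $n$ labeled vertices (each pair an edge independently with probability $1/2$). *)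

theory Defs
  imports Complex_Main
begin

text \<open>Simple graphs on a finite vertex set V (of naturals), given by an edge set E
  of 2-element subsets of V.\<close>

definition pairs_on :: "nat set \<Rightarrow> nat set set" where
  "pairs_on V = {e. \<exists>i\<in>V. \<exists>j\<in>V. i \<noteq> j \<and> e = {i, j}}"

definition compl_graph :: "nat set \<Rightarrow> nat set set \<Rightarrow> nat set set" where
  "compl_graph V E = pairs_on V - E"

definition induced_iso ::
  "nat set \<Rightarrow> nat set set \<Rightarrow> nat set set \<Rightarrow> nat set \<Rightarrow> bool" where
  "induced_iso VH EH EG S \<longleftrightarrow>
     (\<exists>f. bij_betw f VH S \<and>
          (\<forall>i\<in>VH. \<forall>j\<in>VH. i \<noteq> j \<longrightarrow> ({i, j} \<in> EH \<longleftrightarrow> {f i, f j} \<in> EG)))"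

definition ind_density ::
  "nat set \<Rightarrow> nat set set \<Rightarrow> nat set \<Rightarrow> nat set set \<Rightarrow> real" where
  "ind_density VH EH VG EG =
     real (card {S. S \<subseteq> VG \<and> card S = card VH \<and> induced_iso VH EH EG S})
     / real (card VG choose card VH)"

abbreviation V4 :: "nat set" where "V4 \<equiv> {0..<4}"

definition K4 :: "nat set set" where "K4 = pairs_on V4"
definition D4 :: "nat set set" where "D4 = pairs_on V4 - {{2,3}}"
definition P3 :: "nat set set" where "P3 = {{0,1},{1,2}}"
definition C4 :: "nat set set" where "C4 = {{0,1},{1,2},{2,3},{3,0}}"
definition P4 :: "nat set set" where "P4 = {{0,1},{1,2},{2,3}}"
definition K13 :: "nat set set" where "K13 = {{0,1},{0,2},{0,3}}"

definition weighted_sum :: "nat set \<Rightarrow> nat set set \<Rightarrow> real" where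
  "weighted_sum V E =
       1 * ind_density V4 K4 V E
     + 1/2 * ind_density V4 (compl_graph V4 K4) V E
     + 5/12 * ind_density V4 D4 V E
     + 5/12 * ind_density V4 (compl_graph V4 D4) V E
     + 1/3 * ind_density V4 P3 V E
     + 1/6 * ind_density V4 (compl_graph V4 P3) V E
     + 1/2 * ind_density V4 C4 V E
     + 1/3 * ind_density V4 (compl_graph V4 C4) V E
     + 1/4 * ind_density V4 K13 V E
     + 1/4 * ind_density V4 (compl_graph V4 K13) V E
     + 1/4 * ind_density V4 P4 V E"

definition in_Pi :: "nat set \<Rightarrow> nat set set \<Rightarrow> bool" where
  "in_Pi V E \<longleftrightarrow> weighted_sum V E \<le> 5/16"

text \<open>Probability that G(n,1/2) (uniform over edge sets on vertex set {0..<n}) satisfies P.\<close>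
definition prob_gnp_half :: "nat \<Rightarrow> (nat set set \<Rightarrow> bool) \<Rightarrow> real" where
  "prob_gnp_half n P =
     real (card {E. E \<subseteq> pairs_on {0..<n} \<and> P E}) / real (card (Pow (pairs_on {0..<n})))"

end

theory Submission
  imports Defs
begin

lemma pairs_alt: "pairs_on V = (\<lambda>(i,j). {i,j}) ` Set.filter (\<lambda>(i,j). i \<noteq> j) (V \<times> V)"
  unfolding pairs_on_def by (auto simp: image_iff)

lemma pairs_V4: "pairs_on {0..<4} = {{0,1},{0,2},{0,3},{1,2},{1,3},{2,3}}"
  unfolding pairs_alt by code_simp

lemma card_pairs_V4: "card (pairs_on {0..<4}) = 6"
  unfolding pairs_V4 by code_simp

lemma pairs_sub_Pow: "pairs_on V \<subseteq> Pow V"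
  unfolding pairs_on_def by auto

lemma finite_pairs: "finite V \<Longrightarrow> finite (pairs_on V)"
  by (rule finite_subset[OF pairs_sub_Pow]) simp

lemma pairs_mono: "S \<subseteq> V \<Longrightarrow> pairs_on S \<subseteq> pairs_on V"
  unfolding pairs_on_def by blast

lemma pairs_image:
  assumes "bij_betw g V S"
  shows "pairs_on S = image g ` pairs_on V"
proof
  show "pairs_on S \<subseteq> image g ` pairs_on V"
  proof
    fix e assume "e \<in> pairs_on S"
    then obtain a b where ab: "a \<in> S" "b \<in> S" "a \<noteq> b" "e = {a,b}" unfolding pairs_on_def by auto
    then obtain i j where ij: "i \<in> V" "j \<in> V" "a = g i" "b = g j"
      using assms unfolding bij_betw_def by auto
    then have "i \<noteq> j" using ab by auto
    then have "{i,j} \<in> pairs_on V" using ij unfolding pairs_on_def by auto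
    moreover have "e = g ` {i,j}" using ab ij by simp
    ultimately show "e \<in> image g ` pairs_on V" by blast
  qed
next
  show "image g ` pairs_on V \<subseteq> pairs_on S"
  proof
    fix e assume "e \<in> image g ` pairs_on V"
    then obtain e' where "e' \<in> pairs_on V" "e = g ` e'" by blast
    then obtain i j where ij: "i \<in> V" "j \<in> V" "i \<noteq> j" "e = {g i, g j}" unfolding pairs_on_def by auto
    have "g i \<noteq> g j" using assms ij unfolding bij_betw_def inj_on_def by blast
    moreover have "g i \<in> S" "g j \<in> S" using assms ij unfolding bij_betw_def by auto
    ultimately show "e \<in> pairs_on S" using ij unfolding pairs_on_def by blast
  qed
qed

lemma iso_restrict: "induced_iso VH H E S \<longleftrightarrow> induced_iso VH H (E \<inter> pairs_on S) S"
proof -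
  have "{f i, f j} \<in> pairs_on S" if "bij_betw f VH S" "i \<in> VH" "j \<in> VH" "i \<noteq> j" for f i j
    using that unfolding bij_betw_def inj_on_def pairs_on_def by auto
  then show ?thesis unfolding induced_iso_def
    by (intro ex_cong1 conj_cong refl) auto
qed

lemma iso_char:
  assumes H: "H \<subseteq> pairs_on VH" and F: "F \<subseteq> pairs_on S"
  shows "induced_iso VH H F S \<longleftrightarrow> (\<exists>f. bij_betw f VH S \<and> F = image f ` H)"
proof
  assume "induced_iso VH H F S"
  then obtain f where f: "bij_betw f VH S"
    and eq: "\<forall>i\<in>VH. \<forall>j\<in>VH. i \<noteq> j \<longrightarrow> ({i, j} \<in> H \<longleftrightarrow> {f i, f j} \<in> F)"
    unfolding induced_iso_def by blast
  have "F = image f ` H"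
  proof
    show "F \<subseteq> image f ` H"
    proof
      fix e assume e: "e \<in> F"
      then obtain a b where ab: "a \<in> S" "b \<in> S" "a \<noteq> b" "e = {a,b}" using F unfolding pairs_on_def by auto
      then obtain i j where ij: "i \<in> VH" "j \<in> VH" "a = f i" "b = f j"
        using f unfolding bij_betw_def by auto
      then have ne: "i \<noteq> j" using ab by auto
      have "{i,j} \<in> H \<longleftrightarrow> {f i, f j} \<in> F" using eq ij(1,2) ne by blast
      moreover have "{f i, f j} \<in> F" using e ab ij by simp
      ultimately have "{i,j} \<in> H" by blast
      moreover have "e = f ` {i,j}" using ij ab by simp
      ultimately show "e \<in> image f ` H" by blast
    qed
  next
    show "image f ` H \<subseteq> F"
    proof
      fix e assume "e \<in> image f ` H"
      then obtain e' where e': "e' \<in> H" "e = f ` e'" by blast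
      then obtain i j where ij: "i \<in> VH" "j \<in> VH" "i \<noteq> j" "e' = {i,j}" using H unfolding pairs_on_def by blast
      have "{i,j} \<in> H \<longleftrightarrow> {f i, f j} \<in> F" using eq ij(1,2,3) by blast
      then have "{f i, f j} \<in> F" using e' ij by simp
      then show "e \<in> F" using e' ij by simp
    qed
  qed
  then show "\<exists>f. bij_betw f VH S \<and> F = image f ` H" using f by blast
next
  assume "\<exists>f. bij_betw f VH S \<and> F = image f ` H"
  then obtain f where f: "bij_betw f VH S" and Fe: "F = image f ` H" by blast
  have inj: "inj_on f VH" using f bij_betw_def by blast
  have "({i, j} \<in> H \<longleftrightarrow> {f i, f j} \<in> F)" if ij: "i \<in> VH" "j \<in> VH" "i \<noteq> j" for i j
  proof
    assume "{i,j} \<in> H"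
    then have "f ` {i,j} \<in> F" using Fe by blast
    then show "{f i, f j} \<in> F" by simp
  next
    assume "{f i, f j} \<in> F"
    then obtain e where e: "e \<in> H" "f ` e = {f i, f j}" using Fe by auto
    have "e \<in> pairs_on VH" using H e(1) by blast
    then obtain k l where kl: "k \<in> VH" "l \<in> VH" "e = {k,l}" unfolding pairs_on_def by auto
    have kk: "f k \<in> {f i, f j}" "f l \<in> {f i, f j}" using e kl by auto
    have "k = i \<or> k = j" using kk(1) inj kl(1) ij(1,2) unfolding inj_on_def by blast
    moreover have "l = i \<or> l = j" using kk(2) inj kl(2) ij(1,2) unfolding inj_on_def by blast
    moreover have "f i \<in> f ` e" using e by simp
    then have "i \<in> e" using inj kl ij(1) unfolding inj_on_def by blast
    moreover have "f j \<in> f ` e" using e by simp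
    then have "j \<in> e" using inj kl ij(2) unfolding inj_on_def by blast
    ultimately have "e = {i,j}" using kl by blast
    then show "{i,j} \<in> H" using e by simp
  qed
  then show "induced_iso VH H F S" unfolding induced_iso_def using f by blast
qed

definition copies :: "nat set \<Rightarrow> nat set set \<Rightarrow> nat set \<Rightarrow> nat set set set" where
  "copies VH H S = {image f ` H | f. bij_betw f VH S}"

lemma copies_sub: "H \<subseteq> pairs_on VH \<Longrightarrow> bij_betw f VH S \<Longrightarrow> image f ` H \<subseteq> pairs_on S"
  using pairs_image[of f VH S] by auto

lemma iso_set_copies:
  assumes "H \<subseteq> pairs_on VH"
  shows "{F. F \<subseteq> pairs_on S \<and> induced_iso VH H F S} = copies VH H S"
proof (intro set_eqI iffI)
  fix F assume "F \<in> {F. F \<subseteq> pairs_on S \<and> induced_iso VH H F S}"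
  then show "F \<in> copies VH H S" using iso_char[OF assms, of F S] unfolding copies_def by auto
next
  fix F assume "F \<in> copies VH H S"
  then obtain f where f: "bij_betw f VH S" "F = image f ` H" unfolding copies_def by auto
  then have "F \<subseteq> pairs_on S" using copies_sub[OF assms] by auto
  then show "F \<in> {F. F \<subseteq> pairs_on S \<and> induced_iso VH H F S}" using iso_char[OF assms, of F S] f by auto
qed

lemma copies_transport:
  assumes g: "bij_betw g V S" and H: "H \<subseteq> Pow V"
  shows "copies V H S = image (image g) ` copies V H V"
proof
  show "image (image g) ` copies V H V \<subseteq> copies V H S"
  proof
    fix x assume "x \<in> image (image g) ` copies V H V"
    then obtain h where h: "bij_betw h V V" "x = image g ` (image h ` H)" unfolding copies_def by auto
    then have "x = image (g \<circ> h) ` H" by (simp add: image_image image_comp)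
    moreover have "bij_betw (g \<circ> h) V S" using h g bij_betw_trans by blast
    ultimately show "x \<in> copies V H S" unfolding copies_def by blast
  qed
next
  show "copies V H S \<subseteq> image (image g) ` copies V H V"
  proof
    fix x assume "x \<in> copies V H S"
    then obtain f where f: "bij_betw f V S" "x = image f ` H" unfolding copies_def by auto
    define h where "h = inv_into V g \<circ> f"
    have hb: "bij_betw h V V" unfolding h_def
      using bij_betw_trans[OF f(1) bij_betw_inv_into[OF g]] by simp
    have gh: "g (h y) = f y" if "y \<in> V" for y
    proof -
      have "f y \<in> g ` V" using f(1) g that unfolding bij_betw_def by auto
      then show ?thesis unfolding h_def by (simp add: f_inv_into_f)
    qed
    have "x = image g ` (image h ` H)"
    proof -
      have "image f e = image g (image h e)" if "e \<in> H" for e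
      proof -
        have "e \<subseteq> V" using H that by auto
        then show ?thesis unfolding image_image using gh by (intro image_cong) auto
      qed
      then show ?thesis using f(2) by (auto simp: image_image) 
    qed
    then show "x \<in> image (image g) ` copies V H V" using hb unfolding copies_def by blast
  qed
qed

lemma card_copies_transport:
  assumes g: "bij_betw g V S" and H: "H \<subseteq> Pow V"
  shows "card (copies V H S) = card (copies V H V)"
proof -
  have sub: "copies V H V \<subseteq> Pow (Pow V)"
    unfolding copies_def using H by (auto simp: bij_betw_def)
  have "inj_on g V" using g bij_betw_def by blast
  then have "inj_on (image g) (Pow V)" by (rule inj_on_image_Pow)
  then have "inj_on (image (image g)) (Pow (Pow V))" by (rule inj_on_image_Pow)
  then have "inj_on (image (image g)) (copies V H V)" using sub inj_on_subset by blast
  then show ?thesis using copies_transport[OF assms] by (simp add: card_image)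
qed

definition L24 :: "nat list list" where "L24 = [[0,1,2,3], [0,1,3,2], [0,2,1,3], [0,2,3,1], [0,3,1,2], [0,3,2,1], [1,0,2,3], [1,0,3,2], [1,2,0,3], [1,2,3,0], [1,3,0,2], [1,3,2,0], [2,0,1,3], [2,0,3,1], [2,1,0,3], [2,1,3,0], [2,3,0,1], [2,3,1,0], [3,0,1,2], [3,0,2,1], [3,1,0,2], [3,1,2,0], [3,2,0,1], [3,2,1,0]]"

lemma L24_props: "\<forall>p\<in>set L24. distinct p \<and> length p = 4 \<and> set p = {0..<4}"
  unfolding L24_def by code_simp

lemma L24_perm:
  assumes "distinct p" "set p = {0..<4::nat}"
  shows "p \<in> set L24"
proof -
  have len: "length p = 4" using distinct_card[OF assms(1)] assms(2) by simp
  then have "\<exists>a b c d. p = [a,b,c,d]" by (auto simp add: length_Suc_conv numeral_eq_Suc)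
  then obtain a b c d where p: "p = [a,b,c,d]" by blast
  have "a \<in> set p" "b \<in> set p" "c \<in> set p" "d \<in> set p" unfolding p by auto
  then have "a < 4" "b < 4" "c < 4" "d < 4" using assms(2) by auto
  then have "a \<in> {0,1,2,3}" "b \<in> {0,1,2,3}" "c \<in> {0,1,2,3}" "d \<in> {0,1,2,3}"
    by auto
  moreover have "\<forall>a\<in>{0,1,2,3::nat}. \<forall>b\<in>{0,1,2,3}. \<forall>c\<in>{0,1,2,3}. \<forall>d\<in>{0,1,2,3}.
     distinct [a,b,c,d] \<longrightarrow> [a,b,c,d] \<in> set L24"
    unfolding L24_def by code_simp
  ultimately show ?thesis using assms(1) unfolding p by blast
qed

lemma copies_V4:
  assumes H: "H \<subseteq> Pow {0..<4}"
  shows "copies {0..<4} H {0..<4} = (\<lambda>p. image ((!) p) ` H) ` set L24"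
proof
  show "copies {0..<4} H {0..<4} \<subseteq> (\<lambda>p. image ((!) p) ` H) ` set L24"
  proof
    fix x assume "x \<in> copies {0..<4} H {0..<4}"
    then obtain h where h: "bij_betw h {0..<4} {0..<4}" "x = image h ` H" unfolding copies_def by auto
    define p where "p = map h [0..<4]"
    have "distinct p" unfolding p_def using h(1) by (simp add: distinct_map bij_betw_def)
    moreover have "set p = {0..<4}" unfolding p_def using h(1) by (simp add: bij_betw_def)
    ultimately have pin: "p \<in> set L24" by (rule L24_perm)
    have "image h e = image ((!) p) e" if "e \<in> H" for e
    proof -
      have "e \<subseteq> {0..<4}" using H that by auto
      then show ?thesis unfolding p_def by (intro image_cong) auto
    qed
    then have "x = image ((!) p) ` H" using h(2) by (auto intro!: image_cong)
    then show "x \<in> (\<lambda>p. image ((!) p) ` H) ` set L24" using pin by blast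
  qed
next
  show "(\<lambda>p. image ((!) p) ` H) ` set L24 \<subseteq> copies {0..<4} H {0..<4}"
  proof
    fix x assume "x \<in> (\<lambda>p. image ((!) p) ` H) ` set L24"
    then obtain p where p: "p \<in> set L24" "x = image ((!) p) ` H" by blast
    have "bij_betw ((!) p) {0..<4} {0..<4}"
      using L24_props p(1) by (intro bij_betw_nth) auto
    then show "x \<in> copies {0..<4} H {0..<4}" using p(2) unfolding copies_def by blast
  qed
qed

lemma card_copies_V4:
  assumes "H \<subseteq> pairs_on {0..<4}"
  shows "card (copies {0..<4} H {0..<4}) = card ((\<lambda>p. image ((!) p) ` H) ` set L24)"
  using copies_V4 assms pairs_sub_Pow by (metis order.trans)

lemma sub_K4: "K4 \<subseteq> pairs_on {0..<4}"
  unfolding pairs_V4 K4_def D4_def P3_def C4_def K13_def P4_def compl_graph_def by code_simp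

lemma K_K4: "card (copies {0..<4} (K4) {0..<4}) = 1"
  unfolding card_copies_V4[OF sub_K4] unfolding pairs_V4 K4_def D4_def P3_def C4_def K13_def P4_def compl_graph_def L24_def
  by code_simp

lemma sub_cK4: "compl_graph {0..<4} K4 \<subseteq> pairs_on {0..<4}"
  unfolding pairs_V4 K4_def D4_def P3_def C4_def K13_def P4_def compl_graph_def by code_simp

lemma K_cK4: "card (copies {0..<4} (compl_graph {0..<4} K4) {0..<4}) = 1"
  unfolding card_copies_V4[OF sub_cK4] unfolding pairs_V4 K4_def D4_def P3_def C4_def K13_def P4_def compl_graph_def L24_def
  by code_simp

lemma sub_D4: "D4 \<subseteq> pairs_on {0..<4}"
  unfolding pairs_V4 K4_def D4_def P3_def C4_def K13_def P4_def compl_graph_def by code_simp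

lemma K_D4: "card (copies {0..<4} (D4) {0..<4}) = 6"
  unfolding card_copies_V4[OF sub_D4] unfolding pairs_V4 K4_def D4_def P3_def C4_def K13_def P4_def compl_graph_def L24_def
  by code_simp

lemma sub_cD4: "compl_graph {0..<4} D4 \<subseteq> pairs_on {0..<4}"
  unfolding pairs_V4 K4_def D4_def P3_def C4_def K13_def P4_def compl_graph_def by code_simp

lemma K_cD4: "card (copies {0..<4} (compl_graph {0..<4} D4) {0..<4}) = 6"
  unfolding card_copies_V4[OF sub_cD4] unfolding pairs_V4 K4_def D4_def P3_def C4_def K13_def P4_def compl_graph_def L24_def
  by code_simp

lemma sub_P3: "P3 \<subseteq> pairs_on {0..<4}"
  unfolding pairs_V4 K4_def D4_def P3_def C4_def K13_def P4_def compl_graph_def by code_simp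

lemma K_P3: "card (copies {0..<4} (P3) {0..<4}) = 12"
  unfolding card_copies_V4[OF sub_P3] unfolding pairs_V4 K4_def D4_def P3_def C4_def K13_def P4_def compl_graph_def L24_def
  by code_simp

lemma sub_cP3: "compl_graph {0..<4} P3 \<subseteq> pairs_on {0..<4}"
  unfolding pairs_V4 K4_def D4_def P3_def C4_def K13_def P4_def compl_graph_def by code_simp

lemma K_cP3: "card (copies {0..<4} (compl_graph {0..<4} P3) {0..<4}) = 12"
  unfolding card_copies_V4[OF sub_cP3] unfolding pairs_V4 K4_def D4_def P3_def C4_def K13_def P4_def compl_graph_def L24_def
  by code_simp

lemma sub_C4: "C4 \<subseteq> pairs_on {0..<4}"
  unfolding pairs_V4 K4_def D4_def P3_def C4_def K13_def P4_def compl_graph_def by code_simp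

lemma K_C4: "card (copies {0..<4} (C4) {0..<4}) = 3"
  unfolding card_copies_V4[OF sub_C4] unfolding pairs_V4 K4_def D4_def P3_def C4_def K13_def P4_def compl_graph_def L24_def
  by code_simp

lemma sub_cC4: "compl_graph {0..<4} C4 \<subseteq> pairs_on {0..<4}"
  unfolding pairs_V4 K4_def D4_def P3_def C4_def K13_def P4_def compl_graph_def by code_simp

lemma K_cC4: "card (copies {0..<4} (compl_graph {0..<4} C4) {0..<4}) = 3"
  unfolding card_copies_V4[OF sub_cC4] unfolding pairs_V4 K4_def D4_def P3_def C4_def K13_def P4_def compl_graph_def L24_def
  by code_simp

lemma sub_K13: "K13 \<subseteq> pairs_on {0..<4}"
  unfolding pairs_V4 K4_def D4_def P3_def C4_def K13_def P4_def compl_graph_def by code_simp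

lemma K_K13: "card (copies {0..<4} (K13) {0..<4}) = 4"
  unfolding card_copies_V4[OF sub_K13] unfolding pairs_V4 K4_def D4_def P3_def C4_def K13_def P4_def compl_graph_def L24_def
  by code_simp

lemma sub_cK13: "compl_graph {0..<4} K13 \<subseteq> pairs_on {0..<4}"
  unfolding pairs_V4 K4_def D4_def P3_def C4_def K13_def P4_def compl_graph_def by code_simp

lemma K_cK13: "card (copies {0..<4} (compl_graph {0..<4} K13) {0..<4}) = 4"
  unfolding card_copies_V4[OF sub_cK13] unfolding pairs_V4 K4_def D4_def P3_def C4_def K13_def P4_def compl_graph_def L24_def
  by code_simp

lemma sub_P4: "P4 \<subseteq> pairs_on {0..<4}"
  unfolding pairs_V4 K4_def D4_def P3_def C4_def K13_def P4_def compl_graph_def by code_simp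

lemma K_P4: "card (copies {0..<4} (P4) {0..<4}) = 12"
  unfolding card_copies_V4[OF sub_P4] unfolding pairs_V4 K4_def D4_def P3_def C4_def K13_def P4_def compl_graph_def L24_def
  by code_simp

lemma split_count:
  assumes "finite P" "A \<subseteq> P"
  shows "card {E. E \<subseteq> P \<and> Q (E \<inter> A)} = card {F. F \<subseteq> A \<and> Q F} * 2 ^ card (P - A)"
proof -
  have "bij_betw (\<lambda>E. (E \<inter> A, E - A)) {E. E \<subseteq> P \<and> Q (E \<inter> A)} ({F. F \<subseteq> A \<and> Q F} \<times> Pow (P - A))"
  proof (rule bij_betw_byWitness[where f'="\<lambda>(F,R). F \<union> R"])
    have key: "(F \<union> R) \<inter> A = F" "(F \<union> R) - A = R" if "F \<subseteq> A" "R \<subseteq> P - A" for F R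
      using that by blast+
    show "\<forall>a'\<in>{F. F \<subseteq> A \<and> Q F} \<times> Pow (P - A). (\<lambda>E. (E \<inter> A, E - A)) ((\<lambda>(F, R). F \<union> R) a') = a'"
      using key by auto
    show "(\<lambda>(F, R). F \<union> R) ` ({F. F \<subseteq> A \<and> Q F} \<times> Pow (P - A)) \<subseteq> {E. E \<subseteq> P \<and> Q (E \<inter> A)}"
      using key assms(2) by auto
  qed (use assms(2) in auto)
  then have "card {E. E \<subseteq> P \<and> Q (E \<inter> A)} = card ({F. F \<subseteq> A \<and> Q F} \<times> Pow (P - A))"
    by (rule bij_betw_same_card)
  also have "\<dots> = card {F. F \<subseteq> A \<and> Q F} * 2 ^ card (P - A)"
    using assms by (simp add: card_cartesian_product card_Pow)
  finally show ?thesis .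
qed

lemma count_S:
  assumes V: "finite V" and S: "S \<subseteq> V" "card S = 4" and H: "H \<subseteq> pairs_on {0..<4}"
  shows "64 * card {E. E \<subseteq> pairs_on V \<and> induced_iso {0..<4} H E S}
         = card (copies {0..<4} H {0..<4}) * 2 ^ card (pairs_on V)"
proof -
  let ?P = "pairs_on V"
  let ?A = "pairs_on S"
  have fin: "finite ?P" by (rule finite_pairs[OF V])
  have AP: "?A \<subseteq> ?P" by (rule pairs_mono[OF S(1)])
  have finS: "finite S" using V S(1) finite_subset by blast
  obtain g where g: "bij_betw g {0..<4::nat} S"
    using finite_same_card_bij[of "{0..<4::nat}" S] finS S(2) by auto
  have cardA: "card ?A = 6"
  proof -
    have "?A = image g ` pairs_on {0..<4}" by (rule pairs_image[OF g])
    moreover have "inj_on (image g) (pairs_on {0..<4})"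
      using inj_on_image_Pow[of g "{0..<4}"] g pairs_sub_Pow inj_on_subset unfolding bij_betw_def by blast
    ultimately show ?thesis using card_pairs_V4 by (simp add: card_image)
  qed
  have HP: "H \<subseteq> Pow {0..<4}" using H pairs_sub_Pow by blast
  have "{E. E \<subseteq> ?P \<and> induced_iso {0..<4} H E S} = {E. E \<subseteq> ?P \<and> induced_iso {0..<4} H (E \<inter> ?A) S}"
    by (intro Collect_cong conj_cong refl) (rule iso_restrict)
  then have "card {E. E \<subseteq> ?P \<and> induced_iso {0..<4} H E S}
      = card {F. F \<subseteq> ?A \<and> induced_iso {0..<4} H F S} * 2 ^ card (?P - ?A)"
    using split_count[OF fin AP, of "\<lambda>F. induced_iso {0..<4} H F S"] by simp
  also have "card {F. F \<subseteq> ?A \<and> induced_iso {0..<4} H F S} = card (copies {0..<4} H {0..<4})"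
    using iso_set_copies[OF H, of S] card_copies_transport[OF g HP] by simp
  finally have eq: "card {E. E \<subseteq> ?P \<and> induced_iso {0..<4} H E S}
      = card (copies {0..<4} H {0..<4}) * 2 ^ card (?P - ?A)" .
  have "card ?A \<le> card ?P" using card_mono[OF fin AP] .
  then have "card ?P = 6 + card (?P - ?A)" using card_Diff_subset[OF finite_subset[OF AP fin] AP] cardA by simp
  then have "(2::nat) ^ card ?P = 64 * 2 ^ card (?P - ?A)" by (simp add: power_add)
  then show ?thesis using eq by simp
qed

lemma sum_card_swap:
  assumes "finite A" "finite B"
  shows "(\<Sum>a\<in>A. card {b\<in>B. R a b}) = (\<Sum>b\<in>B. card {a\<in>A. R a b})"
proof -
  have "(\<Sum>a\<in>A. card {b\<in>B. R a b}) = (\<Sum>a\<in>A. \<Sum>b\<in>B. if R a b then 1 else 0)"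
    using assms by (simp add: sum.inter_filter[symmetric])
  also have "\<dots> = (\<Sum>b\<in>B. \<Sum>a\<in>A. if R a b then 1 else 0)" by (rule sum.swap)
  also have "\<dots> = (\<Sum>b\<in>B. card {a\<in>A. R a b})"
    using assms by (simp add: sum.inter_filter[symmetric])
  finally show ?thesis .
qed

definition cnt :: "nat set set \<Rightarrow> nat set \<Rightarrow> nat set set \<Rightarrow> nat" where
  "cnt H V E = card {S. S \<subseteq> V \<and> card S = 4 \<and> induced_iso {0..<4} H E S}"

lemma sum_cnt:
  assumes V: "finite V" and H: "H \<subseteq> pairs_on {0..<4}"
  shows "64 * (\<Sum>E\<in>Pow (pairs_on V). cnt H V E)
         = card (copies {0..<4} H {0..<4}) * ((card V choose 4) * 2 ^ card (pairs_on V))"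
proof -
  let ?Q = "{S. S \<subseteq> V \<and> card S = 4}"
  let ?P = "pairs_on V"
  let ?K = "card (copies {0..<4} H {0..<4})"
  have fQ: "finite ?Q" using V by simp
  have fP: "finite (Pow ?P)" using finite_pairs[OF V] by simp
  have "(\<Sum>E\<in>Pow ?P. cnt H V E) = (\<Sum>E\<in>Pow ?P. card {S\<in>?Q. induced_iso {0..<4} H E S})"
    unfolding cnt_def by (intro sum.cong refl arg_cong[where f=card]) auto
  also have "\<dots> = (\<Sum>S\<in>?Q. card {E\<in>Pow ?P. induced_iso {0..<4} H E S})"
    by (rule sum_card_swap[OF fP fQ])
  finally have "64 * (\<Sum>E\<in>Pow ?P. cnt H V E) = (\<Sum>S\<in>?Q. 64 * card {E\<in>Pow ?P. induced_iso {0..<4} H E S})"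
    by (simp add: sum_distrib_left)
  also have "\<dots> = (\<Sum>S\<in>?Q. ?K * 2 ^ card ?P)"
  proof (rule sum.cong[OF refl])
    fix S assume "S \<in> ?Q"
    then have "64 * card {E. E \<subseteq> ?P \<and> induced_iso {0..<4} H E S} = ?K * 2 ^ card ?P"
      using count_S[OF V _ _ H, of S] by auto
    moreover have "{E\<in>Pow ?P. induced_iso {0..<4} H E S} = {E. E \<subseteq> ?P \<and> induced_iso {0..<4} H E S}" by auto
    ultimately show "64 * card {E\<in>Pow ?P. induced_iso {0..<4} H E S} = ?K * 2 ^ card ?P" by simp
  qed
  also have "\<dots> = card ?Q * (?K * 2 ^ card ?P)" by simp
  also have "card ?Q = card V choose 4" by (rule n_subsets[OF V])
  finally show ?thesis by simp
qed

definition TT :: "nat set \<Rightarrow> nat set set \<Rightarrow> nat" where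
  "TT V E = 12 * cnt K4 V E + 6 * cnt (compl_graph {0..<4} K4) V E
     + 5 * cnt D4 V E + 5 * cnt (compl_graph {0..<4} D4) V E
     + 4 * cnt P3 V E + 2 * cnt (compl_graph {0..<4} P3) V E
     + 6 * cnt C4 V E + 4 * cnt (compl_graph {0..<4} C4) V E
     + 3 * cnt K13 V E + 3 * cnt (compl_graph {0..<4} K13) V E
     + 3 * cnt P4 V E"

lemma ind_density_cnt: "ind_density {0..<4} H V E = real (cnt H V E) / real (card V choose 4)"
  unfolding ind_density_def cnt_def by simp

lemma ws_TT:
  assumes "card V choose 4 > 0"
  shows "weighted_sum V E = real (TT V E) / (12 * real (card V choose 4))"
  using assms unfolding weighted_sum_def ind_density_cnt TT_def
  by (simp add: field_simps)

lemma sum_TT: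
  assumes V: "finite V"
  shows "4 * (\<Sum>E\<in>Pow (pairs_on V). TT V E) = 15 * ((card V choose 4) * 2 ^ card (pairs_on V))"
proof -
  define X where "X = (card V choose 4) * 2 ^ card (pairs_on V)"
  let ?s = "\<lambda>H. \<Sum>E\<in>Pow (pairs_on V). cnt H V E"
  have s1: "64 * ?s K4 = 1 * X" using sum_cnt[OF V sub_K4] K_K4 X_def by simp
  have s2: "64 * ?s (compl_graph {0..<4} K4) = 1 * X" using sum_cnt[OF V sub_cK4] K_cK4 X_def by simp
  have s3: "64 * ?s D4 = 6 * X" using sum_cnt[OF V sub_D4] K_D4 X_def by simp
  have s4: "64 * ?s (compl_graph {0..<4} D4) = 6 * X" using sum_cnt[OF V sub_cD4] K_cD4 X_def by simp
  have s5: "64 * ?s P3 = 12 * X" using sum_cnt[OF V sub_P3] K_P3 X_def by simp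
  have s6: "64 * ?s (compl_graph {0..<4} P3) = 12 * X" using sum_cnt[OF V sub_cP3] K_cP3 X_def by simp
  have s7: "64 * ?s C4 = 3 * X" using sum_cnt[OF V sub_C4] K_C4 X_def by simp
  have s8: "64 * ?s (compl_graph {0..<4} C4) = 3 * X" using sum_cnt[OF V sub_cC4] K_cC4 X_def by simp
  have s9: "64 * ?s K13 = 4 * X" using sum_cnt[OF V sub_K13] K_K13 X_def by simp
  have s10: "64 * ?s (compl_graph {0..<4} K13) = 4 * X" using sum_cnt[OF V sub_cK13] K_cK13 X_def by simp
  have s11: "64 * ?s P4 = 12 * X" using sum_cnt[OF V sub_P4] K_P4 X_def by simp
  have "(\<Sum>E\<in>Pow (pairs_on V). TT V E) = 12 * ?s K4 + 6 * ?s (compl_graph {0..<4} K4)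
     + 5 * ?s D4 + 5 * ?s (compl_graph {0..<4} D4)
     + 4 * ?s P3 + 2 * ?s (compl_graph {0..<4} P3)
     + 6 * ?s C4 + 4 * ?s (compl_graph {0..<4} C4)
     + 3 * ?s K13 + 3 * ?s (compl_graph {0..<4} K13)
     + 3 * ?s P4"
    unfolding TT_def by (simp add: sum.distrib sum_distrib_left)
  then have "64 * (\<Sum>E\<in>Pow (pairs_on V). TT V E) = 240 * X"
    using s1 s2 s3 s4 s5 s6 s7 s8 s9 s10 s11 by linarith
  then show ?thesis unfolding X_def by linarith
qed

lemma choose4_bound: "24 * (n choose 4) \<le> n ^ 4"
proof (cases "4 \<le> n")
  case True
  have "fact 4 * fact (n - 4) * (n choose 4) = fact n" by (rule binomial_fact_lemma[OF True])
  moreover have f4: "(fact 4::nat) = 24" by code_simp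
  ultimately have "fact n = (24 * (n choose 4)) * fact (n - 4)" by (simp add: algebra_simps)
  then have "fact n div fact (n - 4) = 24 * (n choose 4)"
    by (metis fact_nonzero nonzero_mult_div_cancel_right)
  with fact_div_fact_le_pow[OF True] show ?thesis by simp
next
  case False
  then have "n < 4" by simp
  then have z: "n choose 4 = 0" by (rule binomial_eq_0)
  show ?thesis unfolding z by simp
qed

theorem lemma2p5:
  fixes n :: nat
  assumes "n \<ge> 4"
  shows "prob_gnp_half n (in_Pi {0..<n}) \<ge> 1 / (2 * real n ^ 4)"
proof -
  define V where "V = {0..<n}"
  define P where "P = pairs_on V"
  define C where "C = n choose 4"
  have finV: "finite V" unfolding V_def by simp
  have cardV: "card V = n" unfolding V_def by simp
  have finP: "finite P" unfolding P_def using finite_pairs[OF finV] .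
  have Cpos: "C > 0" unfolding C_def using assms by simp
  define N where "N = card (Pow P)"
  have N_eq: "N = 2 ^ card P" unfolding N_def using finP by (simp add: card_Pow)
  define G where "G = {E \<in> Pow P. 4 * TT V E \<le> 15 * C}"
  have inPi: "in_Pi V E \<longleftrightarrow> 4 * TT V E \<le> 15 * C" for E
  proof -
    have "in_Pi V E \<longleftrightarrow> real (TT V E) / (12 * real C) \<le> 5 / 16"
      unfolding in_Pi_def using ws_TT[of V E] Cpos cardV C_def by simp
    also have "\<dots> \<longleftrightarrow> 16 * real (TT V E) \<le> 60 * real C" using Cpos by (simp add: field_simps)
    also have "\<dots> \<longleftrightarrow> 4 * TT V E \<le> 15 * C" by linarith
    finally show ?thesis .
  qed
  have Gset: "{E. E \<subseteq> pairs_on {0..<n} \<and> in_Pi {0..<n} E} = G"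
    unfolding G_def P_def V_def[symmetric] using inPi by auto
  have prob: "prob_gnp_half n (in_Pi {0..<n}) = real (card G) / real N"
    unfolding prob_gnp_half_def Gset N_def P_def V_def ..
  have finPP: "finite (Pow P)" using finP by simp
  have GP: "G \<subseteq> Pow P" unfolding G_def by auto
  have sumT: "4 * (\<Sum>E\<in>Pow P. TT V E) = 15 * C * N"
    using sum_TT[OF finV] cardV unfolding N_eq C_def P_def by simp
  have "(\<Sum>E\<in>Pow P - G. 15 * C + 1) \<le> (\<Sum>E\<in>Pow P - G. 4 * TT V E)"
    by (rule sum_mono) (auto simp: G_def)
  also have "\<dots> \<le> (\<Sum>E\<in>Pow P. 4 * TT V E)"
    by (rule sum_mono2[OF finPP]) auto
  also have "\<dots> = 15 * C * N" using sumT by (simp add: sum_distrib_left)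
  finally have ineq: "card (Pow P - G) * (15 * C + 1) \<le> 15 * C * N" by simp
  have cd: "card (Pow P - G) = N - card G" unfolding N_def using card_Diff_subset[OF finite_subset[OF GP finPP] GP] .
  have cG: "card G \<le> N" unfolding N_def using card_mono[OF finPP GP] .
  have Npos: "N > 0" unfolding N_eq by simp
  have h: "(N - card G) * (15 * C + 1) \<le> 15 * C * N" using ineq cd by simp
  then have "N * (15 * C + 1) - card G * (15 * C + 1) \<le> 15 * C * N" by (simp only: diff_mult_distrib)
  then have "N * (15 * C + 1) \<le> 15 * C * N + card G * (15 * C + 1)" by (simp only: le_diff_conv)
  then have keyn: "N \<le> card G * (15 * C + 1)" by (simp add: algebra_simps)
  then have "real N \<le> real (card G * (15 * C + 1))" by (simp only: of_nat_le_iff)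
  then have key: "real N \<le> real (card G) * (15 * real C + 1)" by (simp add: algebra_simps)
  have Cb: "24 * real C \<le> real n ^ 4"
  proof -
    have "real (24 * C) \<le> real (n ^ 4)" using choose4_bound[of n] unfolding C_def by (simp only: of_nat_le_iff)
    then show ?thesis by simp
  qed
  have n1: "real n ^ 4 \<ge> 1" using assms by simp
  have "15 * real C + 1 \<le> 2 * real n ^ 4" using Cb n1 by linarith
  then have "real N \<le> real (card G) * (2 * real n ^ 4)"
    using key by (meson mult_left_mono of_nat_0_le_iff order.trans)
  then have "1 / (2 * real n ^ 4) \<le> real (card G) / real N"
  proof -
    have a: "0 < 2 * real n ^ 4" using assms by simp
    have b: "0 < real N" using Npos by simp
    show ?thesis using a b \<open>real N \<le> real (card G) * (2 * real n ^ 4)\<close>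
      by (simp add: divide_simps mult.commute)
  qed
  then show ?thesis using prob by simp
qed

end
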